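(* Fix an observation sequence $\{s_t,a_t\}_{t\in\mathbb Z}$, $\theta,\hat\theta\in\Theta$, a time $t$, an indexed family $\{\rho^\theta_t\}_{t\in\mathbb Z}$ as below, and any probability measure $\varphi$ on $\mathcal O\times\{0,1\}$. Then $$\big\|\varphi K^{\hat\theta,\theta}_{F,t}-\varphi K^{\theta,\theta}_{F,t}\big\|_{TV}\le\frac{\max_{o_{t-1},o_t,b_t}h(\theta;o_{t-1},s_t,a_t,o_t,b_t)}{\min_{o_{t-1},o_t,b_t}h(\theta;o_{t-1},s_t,a_t,o_t,b_t)}\cdot\frac{L_{\theta,\|\hat\theta-\theta\|_2}\,\|\hat\theta-\theta\|_2}{\min_{o_{t-1},o_t,b_t}h(\hat\theta;o_{t-1},s_t,a_t,o_t,b_t)}.$$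
   Context: $\mathcal S,\mathcal A,\mathcal O$ are finite sets; $\Theta=\Theta_{hi}\times\Theta_{lo}\times\Theta_b$ is a convex compact subset of a Euclidean space. There are policies $\pi_{hi}(o\mid s;\theta_{hi})$ (distribution on $\mathcal O$), $\pi_{lo}(a\mid s,o;\theta_{lo})$ (distribution on $\mathcal A$), $\pi_b(b\mid s,o';\theta_b)$ (distribution on $\{0,1\}$); standing assumption: on an open set $\tilde\Theta\supseteq\Theta$ they are defined, strictly positive and continuously differentiable in $\theta$. For fixed $\zeta\in(0,1)$, $\bar\pi_{hi}(o_t\mid s_t,o_{t-1},b_t;\theta_{hi})$ equals $\pi_{hi}(o_t\mid s_t;\theta_{hi})$ if $b_t=1$, $1-\zeta+\zeta/|\mathcal O|$ if $b_t=0,o_t=o_{t-1}$, $\zeta/|\mathcal O|$ if $b_t=0,o_t\ne o_{t-1}$. Define $h(\theta;o_{t-1},s_t,a_t,o_t,b_t)=\pi_b(b_t\mid s_t,o_{t-1};\theta_b)\bar\pi_{hi}(o_t\mid s_t,o_{t-1},b_t;\theta_{hi})\pi_{lo}(a_t\mid s_t,o_t;\theta_{lo})$. For $\theta\in\Theta,\delta>0$, $L_{\theta,\delta}$ is the smallest constant $L$ such that for all values of $(o_{t-1},s_t,a_t,o_t,b_t)$, $\tilde\theta\mapsto h(\tilde\theta;o_{t-1},s_t,a_t,o_t,b_t)$ is $L$-Lipschitz (in $\|\cdot\|_2$) on $\{\tilde\theta\in\Theta:\|\tilde\theta-\theta\|_2\le\delta\}$. Given the observation sequence, the backward operator $B^\theta_t$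 maps a probability measure $\rho$ on $\mathcal O\times\{0,1\}$ to the probability measure $B^\theta_t\rho(o_t,b_t)\propto\sum_{o_{t+1},b_{t+1}}h(\theta;o_t,s_{t+1},a_{t+1},o_{t+1},b_{t+1})\rho(o_{t+1},b_{t+1})$ (normalized). $\{\rho^\theta_t\}_{t\in\mathbb Z}$ is a family of strictly positive probability measures on $\mathcal O\times\{0,1\}$ with $B^\theta_t\rho^\theta_{t+1}=\rho^\theta_t$ for all $t$. For $\hat\theta\in\Theta$, the forward smoothing operator is $\varphi K^{\hat\theta,\theta}_{F,t}(o_t,b_t)=C^{\hat\theta,\theta}_F\sum_{o_{t-1},b_{t-1}}\frac{h(\hat\theta;o_{t-1},s_t,a_t,o_t,b_t)\rho^\theta_t(o_t,b_t)\varphi(o_{t-1},b_{t-1})}{\sum_{o'_t,b'_t}h(\theta;o_{t-1},s_t,a_t,o'_t,b'_t)\rho^\theta_t(o'_t,b'_t)}$, where $C^{\hat\theta,\theta}_F>0$ normalizes the result to a probability measure. $\|\nu_1-\nu_2\|_{TV}=\frac12\sum|\nu_1-\nu_2|$. *)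

theory Defs
  imports "HOL-Analysis.Analysis"
begin

(* Parameters: theta = (theta_hi, theta_lo, theta_b) :: 'h \<times> 'l \<times> 'b.
   The product norm of Isabelle is the Euclidean (L2) norm of the concatenation. *)

definition pibar_hi ::
  "real \<Rightarrow> ('h \<Rightarrow> 's \<Rightarrow> 'o::finite \<Rightarrow> real) \<Rightarrow> 'h \<Rightarrow> 's \<Rightarrow> 'o \<Rightarrow> bool \<Rightarrow> 'o \<Rightarrow> real" where
  "pibar_hi zeta pi_hi th s o_prev b o_cur =
     (if b then pi_hi th s o_cur
      else if o_cur = o_prev then 1 - zeta + zeta / real CARD('o)
      else zeta / real CARD('o))"

definition hfun ::
  "real \<Rightarrow> ('h \<Rightarrow> 's \<Rightarrow> 'o::finite \<Rightarrow> real) \<Rightarrow> ('l \<Rightarrow> 's \<Rightarrow> 'o \<Rightarrow> 'a \<Rightarrow> real)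
   \<Rightarrow> ('b \<Rightarrow> 's \<Rightarrow> 'o \<Rightarrow> bool \<Rightarrow> real)
   \<Rightarrow> 'h \<times> 'l \<times> 'b \<Rightarrow> 'o \<Rightarrow> 's \<Rightarrow> 'a \<Rightarrow> 'o \<Rightarrow> bool \<Rightarrow> real" where
  "hfun zeta pi_hi pi_lo pi_b th o_prev s a o_cur b =
     pi_b (snd (snd th)) s o_prev b * pibar_hi zeta pi_hi (fst th) s o_prev b o_cur
     * pi_lo (fst (snd th)) s o_cur a"

definition Lconst ::
  "('p::metric_space) set \<Rightarrow> ('p \<Rightarrow> 'o \<Rightarrow> 's \<Rightarrow> 'a \<Rightarrow> 'o \<Rightarrow> bool \<Rightarrow> real) \<Rightarrow> 'p \<Rightarrow> real \<Rightarrow> real" where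
  "Lconst Theta h th delta =
     Inf {L. \<forall>o_prev s a o_cur b.
               L-lipschitz_on (Theta \<inter> cball th delta) (\<lambda>th'. h th' o_prev s a o_cur b)}"

definition C1_on :: "('p::real_normed_vector) set \<Rightarrow> ('p \<Rightarrow> real) \<Rightarrow> bool" where
  "C1_on U f \<longleftrightarrow> (\<exists>D. (\<forall>x\<in>U. (f has_derivative blinfun_apply (D x)) (at x)) \<and> continuous_on U D)"

definition is_prob :: "('x::finite \<Rightarrow> real) \<Rightarrow> bool" where
  "is_prob nu \<longleftrightarrow> (\<forall>x. 0 \<le> nu x) \<and> sum nu UNIV = 1"

definition normalize :: "('x::finite \<Rightarrow> real) \<Rightarrow> 'x \<Rightarrow> real" where
  "normalize u = (\<lambda>x. u x / sum u UNIV)"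

definition backward ::
  "('o \<Rightarrow> 's \<Rightarrow> 'a \<Rightarrow> 'o \<Rightarrow> bool \<Rightarrow> real) \<Rightarrow> (int \<Rightarrow> 's) \<Rightarrow> (int \<Rightarrow> 'a) \<Rightarrow> int
    \<Rightarrow> ('o::finite \<times> bool \<Rightarrow> real) \<Rightarrow> ('o \<times> bool \<Rightarrow> real)" where
  "backward hth s a t rho = normalize (\<lambda>(o1, b1).
      \<Sum>(o2, b2)\<in>UNIV. hth o1 (s (t+1)) (a (t+1)) o2 b2 * rho (o2, b2))"

(* forward smoothing operator phi K^{hat theta, theta}_{F,t};
   hhat = h(hat theta; ...), hth = h(theta; ...), rho_t = rho^theta_t *)
definition forwardK ::
  "('o \<Rightarrow> 's \<Rightarrow> 'a \<Rightarrow> 'o \<Rightarrow> bool \<Rightarrow> real) \<Rightarrow> ('o \<Rightarrow> 's \<Rightarrow> 'a \<Rightarrow> 'o \<Rightarrow> bool \<Rightarrow> real)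
    \<Rightarrow> 's \<Rightarrow> 'a \<Rightarrow> ('o::finite \<times> bool \<Rightarrow> real) \<Rightarrow> ('o \<times> bool \<Rightarrow> real) \<Rightarrow> ('o \<times> bool \<Rightarrow> real)" where
  "forwardK hhat hth st act rho_t phi = normalize (\<lambda>(o1, b1).
      \<Sum>(o0, b0)\<in>UNIV. hhat o0 st act o1 b1 * rho_t (o1, b1) * phi (o0, b0)
         / (\<Sum>(o2, b2)\<in>UNIV. hth o0 st act o2 b2 * rho_t (o2, b2)))"

definition tv_dist :: "('x::finite \<Rightarrow> real) \<Rightarrow> ('x \<Rightarrow> real) \<Rightarrow> real" where
  "tv_dist nu1 nu2 = (1/2) * (\<Sum>x\<in>UNIV. \<bar>nu1 x - nu2 x\<bar>)"

end

theory Submission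
  imports Defs
begin


lemma key:
  fixes H Hh :: "'p::finite \<Rightarrow> 'x::finite \<Rightarrow> real" and r :: "'x \<Rightarrow> real" and phi :: "'p \<Rightarrow> real"
  assumes r: "is_prob r" and phi: "is_prob phi"
    and m: "0 < m" and Hm: "\<And>p x. m \<le> H p x" and HM: "\<And>p x. H p x \<le> M"
    and mh: "0 < mh" and Hhm: "\<And>p x. mh \<le> Hh p x"
    and E: "\<And>p x. \<bar>Hh p x - H p x\<bar> \<le> E"
  shows "tv_dist (normalize (\<lambda>x. \<Sum>p\<in>UNIV. Hh p x * r x * phi p / (\<Sum>y\<in>UNIV. H p y * r y)))
                 (normalize (\<lambda>x. \<Sum>p\<in>UNIV. H p x * r x * phi p / (\<Sum>y\<in>UNIV. H p y * r y)))
         \<le> M / m * (E / mh)"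
proof -
  define D where "D p = (\<Sum>y\<in>UNIV. H p y * r y)" for p
  have r0: "\<And>x. 0 \<le> r x" and r1: "sum r UNIV = 1" using r by (auto simp: is_prob_def)
  have p0: "\<And>x. 0 \<le> phi x" and p1: "sum phi UNIV = 1" using phi by (auto simp: is_prob_def)
  have Dm: "m \<le> D p" for p
  proof -
    have "m = (\<Sum>y\<in>UNIV. m * r y)" using r1 by (simp add: sum_distrib_left[symmetric])
    also have "\<dots> \<le> D p" unfolding D_def by (rule sum_mono) (simp add: Hm mult_right_mono r0)
    finally show ?thesis .
  qed
  have DM: "D p \<le> M" for p
  proof -
    have "D p \<le> (\<Sum>y\<in>UNIV. M * r y)" unfolding D_def by (rule sum_mono) (simp add: HM mult_right_mono r0)
    also have "\<dots> = M" using r1 by (simp add: sum_distrib_left[symmetric])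
    finally show ?thesis .
  qed
  have Dp: "0 < D p" for p using Dm[of p] m by linarith
  define uh where "uh x = (\<Sum>p\<in>UNIV. Hh p x * r x * phi p / D p)" for x
  define u where "u x = (\<Sum>p\<in>UNIV. H p x * r x * phi p / D p)" for x
  have su: "sum u UNIV = 1"
  proof -
    have "sum u UNIV = (\<Sum>p\<in>UNIV. phi p / D p * (\<Sum>x\<in>UNIV. H p x * r x))"
      unfolding u_def by (subst sum.swap) (simp add: sum_distrib_left mult_ac)
    also have "\<dots> = sum phi UNIV" using Dp by (simp add: D_def[symmetric]) (metis less_irrefl)
    finally show ?thesis using p1 by simp
  qed
  define Z where "Z = sum uh UNIV"
  have Zeq: "Z = (\<Sum>p\<in>UNIV. phi p / D p * (\<Sum>x\<in>UNIV. Hh p x * r x))"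
    unfolding Z_def uh_def by (subst sum.swap) (simp add: sum_distrib_left mult_ac)
  have Zlow: "mh / M \<le> Z"
  proof -
    have M0: "0 < M" using DM[of undefined] Dp[of undefined] by linarith
    have "mh / M = (\<Sum>p\<in>UNIV. phi p * (mh / M))" using p1 by (metis sum_distrib_right mult_1_left)
    also have "\<dots> \<le> Z" unfolding Zeq
    proof (rule sum_mono)
      fix p
      have a: "mh \<le> (\<Sum>x\<in>UNIV. Hh p x * r x)"
      proof -
        have "mh = (\<Sum>y\<in>UNIV. mh * r y)" using r1 by (simp add: sum_distrib_left[symmetric])
        also have "\<dots> \<le> (\<Sum>x\<in>UNIV. Hh p x * r x)" by (rule sum_mono) (simp add: Hhm mult_right_mono r0)
        finally show ?thesis .
      qed
      have "mh / M \<le> mh / D p" using DM[of p] Dp[of p] mh by (simp add: frac_le)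
      also have "\<dots> \<le> (\<Sum>x\<in>UNIV. Hh p x * r x) / D p" using a Dp[of p] by (simp add: divide_right_mono)
      finally have "mh / M \<le> (\<Sum>x\<in>UNIV. Hh p x * r x) / D p" .
      then have "phi p * (mh / M) \<le> phi p * ((\<Sum>x\<in>UNIV. Hh p x * r x) / D p)"
        by (rule mult_left_mono[OF _ p0[of p]])
      then show "phi p * (mh / M) \<le> phi p / D p * (\<Sum>x\<in>UNIV. Hh p x * r x)"
        by simp
    qed
    finally show ?thesis .
  qed
  have Zp: "0 < Z" using Zlow mh DM[of undefined] Dp[of undefined]
    by (smt (verit) divide_pos_pos)
  have diff: "(\<Sum>x\<in>UNIV. \<bar>uh x - u x\<bar>) \<le> E / m"
  proof -
    have "(\<Sum>x\<in>UNIV. \<bar>uh x - u x\<bar>) \<le> (\<Sum>x\<in>UNIV. \<Sum>p\<in>UNIV. E * r x * phi p / m)"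
    proof (rule sum_mono)
      fix x
      have "\<bar>uh x - u x\<bar> = \<bar>\<Sum>p\<in>UNIV. (Hh p x - H p x) * r x * phi p / D p\<bar>"
        unfolding uh_def u_def by (simp add: sum_subtractf[symmetric] algebra_simps diff_divide_distrib)
      also have "\<dots> \<le> (\<Sum>p\<in>UNIV. \<bar>(Hh p x - H p x) * r x * phi p / D p\<bar>)" by (rule sum_abs)
      also have "\<dots> \<le> (\<Sum>p\<in>UNIV. E * r x * phi p / m)"
      proof (rule sum_mono)
        fix p
        have "\<bar>(Hh p x - H p x) * r x * phi p / D p\<bar> = \<bar>Hh p x - H p x\<bar> * (r x * phi p) / D p"
          using r0[of x] p0[of p] Dp[of p] by (simp add: abs_mult abs_divide)
        also have "\<dots> \<le> E * (r x * phi p) / D p"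
          using E[of p x] r0[of x] p0[of p] Dp[of p] by (simp add: divide_right_mono mult_right_mono)
        also have "\<dots> \<le> E * (r x * phi p) / m"
          using E[of p x] r0[of x] p0[of p] Dp[of p] Dm[of p] m
          by (intro divide_left_mono) (auto intro!: mult_nonneg_nonneg)
        finally show "\<bar>(Hh p x - H p x) * r x * phi p / D p\<bar> \<le> E * r x * phi p / m" by (simp add: mult_ac)
      qed
      finally show "\<bar>uh x - u x\<bar> \<le> (\<Sum>p\<in>UNIV. E * r x * phi p / m)" .
    qed
    also have "\<dots> = (\<Sum>x\<in>UNIV. \<Sum>p\<in>UNIV. (E / m * r x) * phi p)"
      by (simp add: field_simps)
    also have "\<dots> = (\<Sum>x\<in>UNIV. (E / m * r x) * sum phi UNIV)" by (simp only: sum_distrib_left)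
    also have "\<dots> = E / m * (sum r UNIV) * (sum phi UNIV)"
      by (simp only: sum_distrib_right[symmetric] sum_distrib_left[symmetric])
    finally show ?thesis using r1 p1 by simp
  qed
  have nu: "normalize u = u" using su by (simp add: normalize_def)
  have nuh: "normalize uh = (\<lambda>x. uh x / Z)" by (simp add: normalize_def Z_def)
  have "tv_dist (normalize uh) (normalize u) = (1/2) * (\<Sum>x\<in>UNIV. \<bar>uh x / Z - u x\<bar>)"
    by (simp add: tv_dist_def nu nuh)
  also have "\<dots> \<le> (1/2) * (\<Sum>x\<in>UNIV. \<bar>uh x - u x\<bar> / Z + u x * \<bar>1 - Z\<bar> / Z)"
  proof -
    have "\<bar>uh x / Z - u x\<bar> \<le> \<bar>uh x - u x\<bar> / Z + u x * \<bar>1 - Z\<bar> / Z" for x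
    proof -
      have u0: "0 \<le> u x" unfolding u_def using Hm m r0 p0 Dp
        by (intro sum_nonneg) (smt (verit) divide_nonneg_pos mult_nonneg_nonneg)
      have eq: "uh x / Z - u x = (uh x - u x) / Z + u x * (1 - Z) / Z" using Zp by (simp add: field_simps)
      have "\<bar>uh x / Z - u x\<bar> \<le> \<bar>(uh x - u x) / Z\<bar> + \<bar>u x * (1 - Z) / Z\<bar>"
        unfolding eq by (rule abs_triangle_ineq)
      also have "\<dots> = \<bar>uh x - u x\<bar> / Z + u x * \<bar>1 - Z\<bar> / Z" using Zp u0 by (simp add: abs_mult abs_divide)
      finally show ?thesis .
    qed
    then show ?thesis by (intro mult_left_mono sum_mono) auto
  qed
  also have "\<dots> = (1/2) * ((\<Sum>x\<in>UNIV. \<bar>uh x - u x\<bar>) / Z + \<bar>1 - Z\<bar> / Z)"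
    using su by (simp add: sum.distrib sum_divide_distrib[symmetric] sum_distrib_right[symmetric])
  also have "\<dots> \<le> (1/2) * ((\<Sum>x\<in>UNIV. \<bar>uh x - u x\<bar>) / Z + (\<Sum>x\<in>UNIV. \<bar>uh x - u x\<bar>) / Z)"
  proof -
    have "\<bar>1 - Z\<bar> = \<bar>\<Sum>x\<in>UNIV. u x - uh x\<bar>" using su by (simp add: Z_def sum_subtractf)
    also have "\<dots> \<le> (\<Sum>x\<in>UNIV. \<bar>u x - uh x\<bar>)" by (rule sum_abs)
    also have "\<dots> = (\<Sum>x\<in>UNIV. \<bar>uh x - u x\<bar>)" by (simp add: abs_minus_commute)
    finally have "\<bar>1 - Z\<bar> / Z \<le> (\<Sum>x\<in>UNIV. \<bar>uh x - u x\<bar>) / Z"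
      using Zp by (intro divide_right_mono) auto
    then show ?thesis by (intro mult_left_mono add_left_mono) auto
  qed
  also have "\<dots> = (\<Sum>x\<in>UNIV. \<bar>uh x - u x\<bar>) / Z" by simp
  also have "\<dots> \<le> (E / m) / Z" using diff Zp by (intro divide_right_mono) auto
  also have "\<dots> \<le> (E / m) / (mh / M)"
  proof -
    have "0 \<le> E / m" using diff by (smt (verit) sum_nonneg abs_ge_zero)
    moreover have "0 < mh / M" using mh DM[of undefined] Dp[of undefined] by simp
    moreover have "0 < Z * (mh / M)" using Zp \<open>0 < mh / M\<close> by (rule mult_pos_pos)
    ultimately show ?thesis by (intro divide_left_mono[OF Zlow])
  qed
  also have "\<dots> = M / m * (E / mh)" by (simp add: field_simps)
  finally show ?thesis unfolding uh_def u_def D_def .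
qed



lemma C1_lip:
  fixes f :: "'p::real_normed_vector \<Rightarrow> real"
  assumes "C1_on U f" "K \<subseteq> U" "compact K" "convex K"
  shows "\<exists>L. L-lipschitz_on K f"
proof -
  obtain D where D: "\<And>x. x\<in>U \<Longrightarrow> (f has_derivative blinfun_apply (D x)) (at x)" and Dc: "continuous_on U D"
    using assms(1) unfolding C1_on_def by blast
  have "continuous_on K (\<lambda>x. norm (D x))"
    using continuous_on_subset[OF Dc assms(2)] by (intro continuous_on_norm)
  then have "bounded ((\<lambda>x. norm (D x)) ` K)"
    using assms(3) by (intro compact_imp_bounded compact_continuous_image)
  then obtain B where B: "\<And>x. x \<in> K \<Longrightarrow> norm (D x) \<le> B"
    unfolding bounded_iff by auto
  have "(max B 0)-lipschitz_on K f"
  proof (rule bounded_derivative_imp_lipschitz[where f' = "\<lambda>x. blinfun_apply (D x)"])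
    show "(f has_derivative blinfun_apply (D x)) (at x within K)" if "x \<in> K" for x
      using D[of x] that assms(2) by (auto intro: has_derivative_at_withinI)
    show "onorm (blinfun_apply (D x)) \<le> max B 0" if "x \<in> K" for x
      using B[OF that] by (simp add: norm_blinfun.rep_eq[symmetric])
  qed (use assms in auto)
  then show ?thesis by blast
qed

lemma lip_bounded:
  fixes f :: "'p::metric_space \<Rightarrow> real"
  assumes "L-lipschitz_on K f" "compact K"
  shows "\<exists>A. 0 \<le> A \<and> (\<forall>x\<in>K. \<bar>f x\<bar> \<le> A)"
proof -
  have "bounded (f ` K)"
    using assms by (intro compact_imp_bounded compact_continuous_image lipschitz_on_continuous_on)
  then obtain A where "\<And>x. x \<in> K \<Longrightarrow> norm (f x) \<le> A" unfolding bounded_iff by auto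
  then show ?thesis by (intro exI[of _ "max A 0"]) (auto intro: le_max_iff_disj[THEN iffD2])
qed

lemma lip_mult:
  fixes f g :: "'p::metric_space \<Rightarrow> real"
  assumes "\<exists>L. L-lipschitz_on K f" "\<exists>L. L-lipschitz_on K g" "compact K"
  shows "\<exists>L. L-lipschitz_on K (\<lambda>x. f x * g x)"
proof -
  obtain L1 L2 where l1: "L1-lipschitz_on K f" and l2: "L2-lipschitz_on K g" using assms by blast
  obtain A where A: "0 \<le> A" "\<forall>x\<in>K. \<bar>f x\<bar> \<le> A" using lip_bounded[OF l1 assms(3)] by blast
  obtain B where B: "0 \<le> B" "\<forall>x\<in>K. \<bar>g x\<bar> \<le> B" using lip_bounded[OF l2 assms(3)] by blast
  have L1: "0 \<le> L1" "0 \<le> L2" using l1 l2 lipschitz_on_nonneg by auto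
  have "(A * L2 + B * L1)-lipschitz_on K (\<lambda>x. f x * g x)"
  proof (rule lipschitz_onI)
    fix x y assume xy: "x \<in> K" "y \<in> K"
    have d1: "\<bar>f x - f y\<bar> \<le> L1 * dist x y" using lipschitz_onD[OF l1 xy] by (simp add: dist_real_def)
    have d2: "\<bar>g x - g y\<bar> \<le> L2 * dist x y" using lipschitz_onD[OF l2 xy] by (simp add: dist_real_def)
    have "f x * g x - f y * g y = f x * (g x - g y) + g y * (f x - f y)" by algebra
    then have "\<bar>f x * g x - f y * g y\<bar> \<le> \<bar>f x\<bar> * \<bar>g x - g y\<bar> + \<bar>g y\<bar> * \<bar>f x - f y\<bar>"
      by (simp add: abs_mult[symmetric] abs_triangle_ineq)
    also have "\<dots> \<le> A * (L2 * dist x y) + B * (L1 * dist x y)"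
      using A B xy d1 d2 by (intro add_mono mult_mono) auto
    finally show "dist (f x * g x) (f y * g y) \<le> (A * L2 + B * L1) * dist x y"
      by (simp add: dist_real_def algebra_simps)
  qed (use A B L1 in auto)
  then show ?thesis by blast
qed

lemma finite_lip:
  fixes F :: "'q::finite \<Rightarrow> 'p::metric_space \<Rightarrow> real"
  assumes "\<And>q. \<exists>L. L-lipschitz_on K (F q)"
  shows "\<exists>L. \<forall>q. L-lipschitz_on K (F q)"
proof -
  obtain Lf where Lf: "\<And>q. (Lf q)-lipschitz_on K (F q)" using assms by metis
  have nn: "\<And>q. 0 \<le> Lf q" using Lf lipschitz_on_nonneg by blast
  have "(\<Sum>q\<in>UNIV. Lf q)-lipschitz_on K (F q)" for q
    by (rule lipschitz_on_mono[OF Lf[of q]]) (auto intro: member_le_sum nn)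
  then show ?thesis by blast
qed

lemma forwardK_alt: "forwardK hh hth st ac r phi = normalize (\<lambda>x. \<Sum>p\<in>UNIV. hh (fst p) st ac (fst x) (snd x) * r x * phi p / (\<Sum>y\<in>UNIV. hth (fst p) st ac (fst y) (snd y) * r y))"
  unfolding forwardK_def by (simp add: case_prod_beta')

theorem lemma9:
  fixes pi_hi :: "'h::euclidean_space \<Rightarrow> 's::finite \<Rightarrow> 'o::finite \<Rightarrow> real"
    and pi_lo :: "'l::euclidean_space \<Rightarrow> 's \<Rightarrow> 'o \<Rightarrow> 'a::finite \<Rightarrow> real"
    and pi_b :: "'b::euclidean_space \<Rightarrow> 's \<Rightarrow> 'o \<Rightarrow> bool \<Rightarrow> real"
    and Theta_hi :: "'h set" and Theta_lo :: "'l set" and Theta_b :: "'b set"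
    and U :: "('h \<times> 'l \<times> 'b) set"
    and zeta :: real
    and s :: "int \<Rightarrow> 's" and a :: "int \<Rightarrow> 'a"
    and th thhat :: "'h \<times> 'l \<times> 'b"
    and t :: int
    and rho :: "int \<Rightarrow> 'o \<times> bool \<Rightarrow> real"
    and phi :: "'o \<times> bool \<Rightarrow> real"
  defines "Theta \<equiv> Theta_hi \<times> Theta_lo \<times> Theta_b"
    and "h \<equiv> hfun zeta pi_hi pi_lo pi_b"
  assumes Theta_convex: "convex Theta" and Theta_compact: "compact Theta"
    and U_open: "open U" and Theta_sub: "Theta \<subseteq> U"
    and pos_hi: "\<And>x st o'. x \<in> U \<Longrightarrow> 0 < pi_hi (fst x) st o'"
    and pos_lo: "\<And>x st o' ac. x \<in> U \<Longrightarrow> 0 < pi_lo (fst (snd x)) st o' ac"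
    and pos_b: "\<And>x st o' bb. x \<in> U \<Longrightarrow> 0 < pi_b (snd (snd x)) st o' bb"
    and sum_hi: "\<And>x st. x \<in> U \<Longrightarrow> (\<Sum>o'\<in>UNIV. pi_hi (fst x) st o') = 1"
    and sum_lo: "\<And>x st o'. x \<in> U \<Longrightarrow> (\<Sum>ac\<in>UNIV. pi_lo (fst (snd x)) st o' ac) = 1"
    and sum_b: "\<And>x st o'. x \<in> U \<Longrightarrow> (\<Sum>bb\<in>UNIV. pi_b (snd (snd x)) st o' bb) = 1"
    and C1_hi: "\<And>st o'. C1_on U (\<lambda>x. pi_hi (fst x) st o')"
    and C1_lo: "\<And>st o' ac. C1_on U (\<lambda>x. pi_lo (fst (snd x)) st o' ac)"
    and C1_b: "\<And>st o' bb. C1_on U (\<lambda>x. pi_b (snd (snd x)) st o' bb)"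
    and zeta: "0 < zeta" "zeta < 1"
    and th_in: "th \<in> Theta" and thhat_in: "thhat \<in> Theta"
    and rho_pos: "\<And>k x. 0 < rho k x"
    and rho_prob: "\<And>k. is_prob (rho k)"
    and rho_backward: "\<And>k. backward (h th) s a k (rho (k + 1)) = rho k"
    and phi_prob: "is_prob phi"
  shows "tv_dist (forwardK (h thhat) (h th) (s t) (a t) (rho t) phi)
                 (forwardK (h th) (h th) (s t) (a t) (rho t) phi)
         \<le> (Max (range (\<lambda>(o0, o1, b1). h th o0 (s t) (a t) o1 b1))
             / Min (range (\<lambda>(o0, o1, b1). h th o0 (s t) (a t) o1 b1)))
           * (Lconst Theta h th (norm (thhat - th)) * norm (thhat - th)
             / Min (range (\<lambda>(o0, o1, b1). h thhat o0 (s t) (a t) o1 b1)))"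
proof -
  have hpos: "0 < h x o1 st ac o2 bb" if "x \<in> U" for x o1 st ac o2 bb
  proof -
    have c: "0 < real CARD('o)" by simp
    have "0 < zeta / real CARD('o)" using zeta c by simp
    moreover have "0 < 1 - zeta + zeta / real CARD('o)" using zeta c
      by (smt (verit) divide_pos_pos)
    ultimately have "0 < pibar_hi zeta pi_hi (fst x) st o1 bb o2"
      unfolding pibar_hi_def using pos_hi[OF that] by auto
    then show ?thesis unfolding h_def hfun_def
      using pos_b[OF that] pos_lo[OF that] by simp
  qed
  define del where "del = norm (thhat - th)"
  define K where "K = Theta \<inter> cball th del"
  have Kc: "compact K" unfolding K_def by (intro compact_Int_closed Theta_compact closed_cball)
  have Kv: "convex K" unfolding K_def by (intro convex_Int Theta_convex convex_cball)
  have KU: "K \<subseteq> U" unfolding K_def using Theta_sub by auto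
  have lipq: "\<exists>L. L-lipschitz_on K (\<lambda>x. h x (fst q) (fst (snd q)) (fst (snd (snd q)))
      (fst (snd (snd (snd q)))) (snd (snd (snd (snd q)))))" for q :: "'o \<times> 's \<times> 'a \<times> 'o \<times> bool"
  proof -
    obtain o1 st ac o2 bb where q: "q = (o1, st, ac, o2, bb)" by (cases q) auto
    have l1: "\<exists>L. L-lipschitz_on K (\<lambda>x. pi_b (snd (snd x)) st o1 bb)"
      by (rule C1_lip[OF C1_b KU Kc Kv])
    have l3: "\<exists>L. L-lipschitz_on K (\<lambda>x. pi_lo (fst (snd x)) st o2 ac)"
      by (rule C1_lip[OF C1_lo KU Kc Kv])
    have l2: "\<exists>L. L-lipschitz_on K (\<lambda>x. pibar_hi zeta pi_hi (fst x) st o1 bb o2)"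
    proof (cases bb)
      case True
      then show ?thesis unfolding pibar_hi_def using C1_lip[OF C1_hi KU Kc Kv] by simp
    next
      case False
      then show ?thesis unfolding pibar_hi_def using lipschitz_on_constant by auto
    qed
    have "\<exists>L. L-lipschitz_on K (\<lambda>x. pi_b (snd (snd x)) st o1 bb * pibar_hi zeta pi_hi (fst x) st o1 bb o2
       * pi_lo (fst (snd x)) st o2 ac)"
      by (intro lip_mult l1 l2 l3 Kc)
    then show ?thesis unfolding q h_def hfun_def by simp
  qed
  obtain L0 where L0: "\<And>q :: 'o \<times> 's \<times> 'a \<times> 'o \<times> bool. L0-lipschitz_on K (\<lambda>x. h x (fst q) (fst (snd q)) (fst (snd (snd q)))
      (fst (snd (snd (snd q)))) (snd (snd (snd (snd q)))))"
    using finite_lip[of K "\<lambda>q x. h x (fst q) (fst (snd q)) (fst (snd (snd q)))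
      (fst (snd (snd (snd q)))) (snd (snd (snd (snd q))))", OF lipq] by blast
  define S where "S = {L. \<forall>o_prev s a o_cur b.
               L-lipschitz_on (Theta \<inter> cball th del) (\<lambda>th'. h th' o_prev s a o_cur b)}"
  have LS: "Lconst Theta h th del = Inf S" unfolding Lconst_def S_def ..
  have Sne: "L0 \<in> S" unfolding S_def K_def[symmetric]
  proof (intro CollectI allI)
    fix o_prev st ac o_cur bb
    show "L0-lipschitz_on K (\<lambda>th'. h th' o_prev st ac o_cur bb)"
      using L0[of "(o_prev, st, ac, o_cur, bb)"] by simp
  qed
  have thK: "th \<in> K" "thhat \<in> K" unfolding K_def del_def using th_in thhat_in
    by (auto simp: dist_norm norm_minus_commute)
  have Ebound: "\<bar>h thhat o1 st ac o2 bb - h th o1 st ac o2 bb\<bar> \<le> Lconst Theta h th del * del"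
    for o1 st ac o2 bb
  proof (cases "del = 0")
    case True
    then have "thhat = th" unfolding del_def by simp
    then show ?thesis using True by simp
  next
    case False
    then have dp: "0 < del" unfolding del_def by simp
    have "\<bar>h thhat o1 st ac o2 bb - h th o1 st ac o2 bb\<bar> / del \<le> Inf S"
    proof (rule cInf_greatest)
      show "S \<noteq> {}" using Sne by blast
      fix L assume "L \<in> S"
      then have "L-lipschitz_on K (\<lambda>th'. h th' o1 st ac o2 bb)" unfolding S_def K_def by blast
      from lipschitz_onD[OF this thK(2) thK(1)]
      have "\<bar>h thhat o1 st ac o2 bb - h th o1 st ac o2 bb\<bar> \<le> L * del"
        by (simp add: dist_real_def dist_norm del_def)
      then show "\<bar>h thhat o1 st ac o2 bb - h th o1 st ac o2 bb\<bar> / del \<le> L"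
        using dp by (simp add: divide_le_eq)
    qed
    then show ?thesis using dp LS by (simp add: divide_le_eq)
  qed
  define fth where "fth = (\<lambda>(o0, o1, b1). h th o0 (s t) (a t) o1 b1)"
  define fhat where "fhat = (\<lambda>(o0, o1, b1). h thhat o0 (s t) (a t) o1 b1)"
  have fin1: "finite (range fth)" "finite (range fhat)" by (auto intro: finite_imageI)
  have thU: "th \<in> U" "thhat \<in> U" using th_in thhat_in Theta_sub by auto
  have mpos: "0 < Min (range fth)"
    using Min_in[OF fin1(1)] hpos[OF thU(1)] unfolding fth_def by auto
  have mhpos: "0 < Min (range fhat)"
    using Min_in[OF fin1(2)] hpos[OF thU(2)] unfolding fhat_def by auto
  have Hm: "Min (range fth) \<le> h th o0 (s t) (a t) o1 b1" for o0 o1 b1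
    using Min_le[OF fin1(1) rangeI[of fth "(o0, o1, b1)"]] unfolding fth_def by simp
  have HM: "h th o0 (s t) (a t) o1 b1 \<le> Max (range fth)" for o0 o1 b1
    using Max_ge[OF fin1(1) rangeI[of fth "(o0, o1, b1)"]] unfolding fth_def by simp
  have Hhm: "Min (range fhat) \<le> h thhat o0 (s t) (a t) o1 b1" for o0 o1 b1
    using Min_le[OF fin1(2) rangeI[of fhat "(o0, o1, b1)"]] unfolding fhat_def by simp
  have K: "tv_dist (normalize (\<lambda>x. \<Sum>p\<in>UNIV. h thhat (fst p) (s t) (a t) (fst x) (snd x) * rho t x * phi p
               / (\<Sum>y\<in>UNIV. h th (fst p) (s t) (a t) (fst y) (snd y) * rho t y)))
           (normalize (\<lambda>x. \<Sum>p\<in>UNIV. h th (fst p) (s t) (a t) (fst x) (snd x) * rho t x * phi p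
               / (\<Sum>y\<in>UNIV. h th (fst p) (s t) (a t) (fst y) (snd y) * rho t y)))
         \<le> Max (range fth) / Min (range fth) * (Lconst Theta h th del * del / Min (range fhat))"
    by (rule key[OF rho_prob phi_prob mpos Hm HM mhpos Hhm Ebound])
  show ?thesis unfolding forwardK_alt fth_def[symmetric] fhat_def[symmetric] del_def[symmetric]
    by (rule K)
qed

end
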